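(* Let $g:\{\pm1\}^{m_1}\times\{\pm1\}^{m_2}\to\{\pm1\}$ be a gadget with $\hat g(S,T)=0$ whenever $S=\emptyset$ or $T=\emptyset$. Then for all $k,d,n$, $$L_{1,k}(\mathrm{XOR},d,1,1,n)\le\Bigl(\max_{S,T}|\hat g(S,T)|\Bigr)^{-k}L_{1,k}(g,d,m_1,m_2,n)\le 2^{(m_1+m_2)k/2}L_{1,k}(g,d,m_1,m_2,n).$$
   Context: $\hat g(S,T)=\mathbb{E}[g(\mathbf{x},\mathbf{y})\prod_{j\in S}\mathbf{x}_j\prod_{j\in T}\mathbf{y}_j]$ for uniform $\mathbf{x}\in\{\pm1\}^{m_1},\mathbf{y}\in\{\pm1\}^{m_2}$. For a randomized two-party protocol $\mathcal{C}:(\{\pm1\}^{m_1})^n\times(\{\pm1\}^{m_2})^n\to[-1,1]$ (value = expected output over internal randomness; inputs are $n$ blocks $x_i\in\{\pm1\}^{m_1}$, $y_i\in\{\pm1\}^{m_2}$), its $g$-fiber is $\mathcal{C}_{\downarrow g}(z)=\mathbb{E}[\mathcal{C}(\mathbf{x},\mathbf{y})\mid g(\mathbf{x}_i,\mathbf{y}_i)=z_i\ \forall i]$ for uniform $\mathbf{x},\mathbf{y}$. For $f:\{\pm1\}^n\to\mathbb{R}$, $L_{1,k}(f)=\sum_{|I|=k}|\hat f(I)|$. $L_{1,k}(g,d,m_1,m_2,n)$ denotes the supremum of $L_{1,k}(\mathcal{C}_{\downarrow g})$ over all such randomized protocols with at most $d$ bits of communication. $\mathrm{XOR}:\{\pm1\}\times\{\pm1\}\to\{\pm1\}$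 is the gadget $\mathrm{XOR}(a,b)=ab$ (so $m_1=m_2=1$). *)

theory Defs
  imports "HOL-Probability.Probability"
begin

definition cube :: "nat \<Rightarrow> (nat \<Rightarrow> real) set" where
  "cube m = (\<Pi>\<^sub>E j\<in>{..<m}. {-1, 1})"

definition gadget_coeff ::
  "((nat \<Rightarrow> real) \<Rightarrow> (nat \<Rightarrow> real) \<Rightarrow> real) \<Rightarrow> nat \<Rightarrow> nat \<Rightarrow> nat set \<Rightarrow> nat set \<Rightarrow> real" where
  "gadget_coeff g m1 m2 S T =
     (\<Sum>x\<in>cube m1. \<Sum>y\<in>cube m2. g x y * (\<Prod>j\<in>S. x j) * (\<Prod>j\<in>T. y j)) / 2 ^ (m1 + m2)"

definition fcoeff :: "nat \<Rightarrow> ((nat \<Rightarrow> real) \<Rightarrow> real) \<Rightarrow> nat set \<Rightarrow> real" where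
  "fcoeff n f I = (\<Sum>z\<in>cube n. f z * (\<Prod>i\<in>I. z i)) / 2 ^ n"

definition L1k :: "nat \<Rightarrow> nat \<Rightarrow> ((nat \<Rightarrow> real) \<Rightarrow> real) \<Rightarrow> real" where
  "L1k n k f = (\<Sum>I\<in>{I. I \<subseteq> {..<n} \<and> card I = k}. \<bar>fcoeff n f I\<bar>)"

definition blocks :: "nat \<Rightarrow> nat \<Rightarrow> (nat \<Rightarrow> nat \<Rightarrow> real) set" where
  "blocks m n = (\<Pi>\<^sub>E i\<in>{..<n}. cube m)"

datatype ('a, 'b) dproto =
    Leaf real
  | Alice "'a \<Rightarrow> bool" "('a, 'b) dproto" "('a, 'b) dproto"
  | Bob "'b \<Rightarrow> bool" "('a, 'b) dproto" "('a, 'b) dproto"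

fun dproto_eval :: "('a, 'b) dproto \<Rightarrow> 'a \<Rightarrow> 'b \<Rightarrow> real" where
  "dproto_eval (Leaf v) x y = v"
| "dproto_eval (Alice f P Q) x y = (if f x then dproto_eval P x y else dproto_eval Q x y)"
| "dproto_eval (Bob f P Q) x y = (if f y then dproto_eval P x y else dproto_eval Q x y)"

fun dproto_cost :: "('a, 'b) dproto \<Rightarrow> nat" where
  "dproto_cost (Leaf v) = 0"
| "dproto_cost (Alice f P Q) = Suc (max (dproto_cost P) (dproto_cost Q))"
| "dproto_cost (Bob f P Q) = Suc (max (dproto_cost P) (dproto_cost Q))"

fun dproto_outputs_ok :: "('a, 'b) dproto \<Rightarrow> bool" where
  "dproto_outputs_ok (Leaf v) = (v \<in> {-1..1})"
| "dproto_outputs_ok (Alice f P Q) = (dproto_outputs_ok P \<and> dproto_outputs_ok Q)"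
| "dproto_outputs_ok (Bob f P Q) = (dproto_outputs_ok P \<and> dproto_outputs_ok Q)"

type_synonym rproto = "(nat \<Rightarrow> nat \<Rightarrow> real, nat \<Rightarrow> nat \<Rightarrow> real) dproto pmf"

definition rproto_ok :: "nat \<Rightarrow> rproto \<Rightarrow> bool" where
  "rproto_ok d p = (\<forall>P\<in>set_pmf p. dproto_cost P \<le> d \<and> dproto_outputs_ok P)"

definition rproto_val :: "rproto \<Rightarrow> (nat \<Rightarrow> nat \<Rightarrow> real) \<Rightarrow> (nat \<Rightarrow> nat \<Rightarrow> real) \<Rightarrow> real" where
  "rproto_val p x y = measure_pmf.expectation p (\<lambda>P. dproto_eval P x y)"

definition fiber_set ::
  "((nat \<Rightarrow> real) \<Rightarrow> (nat \<Rightarrow> real) \<Rightarrow> real) \<Rightarrow> nat \<Rightarrow> nat \<Rightarrow> nat \<Rightarrow> (nat \<Rightarrow> real)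
    \<Rightarrow> ((nat \<Rightarrow> nat \<Rightarrow> real) \<times> (nat \<Rightarrow> nat \<Rightarrow> real)) set" where
  "fiber_set g m1 m2 n z =
     {(x, y). x \<in> blocks m1 n \<and> y \<in> blocks m2 n \<and> (\<forall>i<n. g (x i) (y i) = z i)}"

definition fiber ::
  "((nat \<Rightarrow> real) \<Rightarrow> (nat \<Rightarrow> real) \<Rightarrow> real) \<Rightarrow> nat \<Rightarrow> nat \<Rightarrow> nat
    \<Rightarrow> ((nat \<Rightarrow> nat \<Rightarrow> real) \<Rightarrow> (nat \<Rightarrow> nat \<Rightarrow> real) \<Rightarrow> real) \<Rightarrow> (nat \<Rightarrow> real) \<Rightarrow> real" where
  "fiber g m1 m2 n C z =
     (\<Sum>(x, y)\<in>fiber_set g m1 m2 n z. C x y) / real (card (fiber_set g m1 m2 n z))"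

definition L1k_comm ::
  "((nat \<Rightarrow> real) \<Rightarrow> (nat \<Rightarrow> real) \<Rightarrow> real) \<Rightarrow> nat \<Rightarrow> nat \<Rightarrow> nat \<Rightarrow> nat \<Rightarrow> nat \<Rightarrow> real" where
  "L1k_comm g k d m1 m2 n =
     (SUP p\<in>{p. rproto_ok d p}. L1k n k (fiber g m1 m2 n (rproto_val p)))"

definition XOR_gadget :: "(nat \<Rightarrow> real) \<Rightarrow> (nat \<Rightarrow> real) \<Rightarrow> real" where
  "XOR_gadget a b = a 0 * b 0"

end

theory Submission
  imports Defs
begin


lemma fact2:
  fixes h :: "'i \<Rightarrow> 'a \<Rightarrow> 'b \<Rightarrow> real"
  assumes "finite A" "\<And>i. i \<in> A \<Longrightarrow> finite (B i)" "\<And>i. i \<in> A \<Longrightarrow> finite (C i)"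
  shows "(\<Sum>x\<in>PiE A B. \<Sum>y\<in>PiE A C. \<Prod>i\<in>A. h i (x i) (y i)) = (\<Prod>i\<in>A. \<Sum>u\<in>B i. \<Sum>v\<in>C i. h i u v)"
proof -
  have "(\<Prod>i\<in>A. \<Sum>u\<in>B i. \<Sum>v\<in>C i. h i u v) = (\<Sum>x\<in>PiE A B. \<Prod>i\<in>A. \<Sum>v\<in>C i. h i (x i) v)"
    by (rule prod_sum_PiE) (use assms in auto)
  also have "\<dots> = (\<Sum>x\<in>PiE A B. \<Sum>y\<in>PiE A C. \<Prod>i\<in>A. h i (x i) (y i))"
    by (rule sum.cong[OF refl], rule prod_sum_PiE) (use assms in auto)
  finally show ?thesis by simp
qed

lemma finite_cube[simp]: "finite (cube m)"
  by (simp add: cube_def finite_PiE)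

lemma card_cube: "card (cube m) = 2 ^ m"
proof -
  have "card {-1, 1::real} = 2" by simp
  then show ?thesis unfolding cube_def by (subst card_PiE) (auto simp: numeral_2_eq_2)
qed

lemma finite_blocks[simp]: "finite (blocks m n)"
  by (simp add: blocks_def finite_PiE)

lemma prod_pm1: "finite S \<Longrightarrow> (\<And>j. j \<in> S \<Longrightarrow> u j \<in> {-1, 1::real}) \<Longrightarrow> (\<Prod>j\<in>S. u j) \<in> {-1, 1}"
  by (induction S rule: finite_induct) force+

lemma chi_cube: "u \<in> cube m \<Longrightarrow> S \<subseteq> {..<m} \<Longrightarrow> (\<Prod>j\<in>S. u j) \<in> {-1, 1::real}"
  by (rule prod_pm1) (auto simp: cube_def finite_subset PiE_iff)

lemma sum_chi_cube:
  assumes "S \<subseteq> {..<m}" "S \<noteq> {}"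
  shows "(\<Sum>u\<in>cube m. \<Prod>j\<in>S. u j) = (0::real)"
proof -
  have "(\<Sum>u\<in>cube m. \<Prod>j\<in>S. u j) = (\<Sum>u\<in>cube m. \<Prod>j\<in>{..<m}. (if j \<in> S then u j else 1))"
    using assms by (intro sum.cong refl) (simp add: prod.If_cases Int_absorb1)
  also have "\<dots> = (\<Prod>j\<in>{..<m}. \<Sum>t\<in>{-1,1::real}. (if j \<in> S then t else 1))"
    unfolding cube_def by (rule prod_sum_PiE[symmetric]) auto
  also have "\<dots> = 0"
    using assms by (intro prod_zero) auto
  finally show ?thesis .
qed

lemma sum_ind_chi:
  assumes "S \<subseteq> {..<m}" "S \<noteq> {}" "\<alpha> \<in> {-1, 1::real}"
  shows "(\<Sum>u\<in>cube m. if (\<Prod>j\<in>S. u j) = \<alpha> then 1 else 0) = (2::real) ^ m / 2"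
proof -
  have "(\<Sum>u\<in>cube m. if (\<Prod>j\<in>S. u j) = \<alpha> then 1 else 0) = (\<Sum>u\<in>cube m. (1 + \<alpha> * (\<Prod>j\<in>S. u j)) / 2)"
    using assms chi_cube by (intro sum.cong refl) (auto dest!: chi_cube[OF _ assms(1)])
  also have "\<dots> = (real (card (cube m)) + \<alpha> * (\<Sum>u\<in>cube m. \<Prod>j\<in>S. u j)) / 2"
    by (simp add: sum_divide_distrib[symmetric] sum.distrib sum_distrib_left)
  finally show ?thesis using sum_chi_cube[OF assms(1,2)] by (simp add: card_cube)
qed



lemma sum_fs:
  "(\<Sum>p\<in>fiber_set g m1 m2 n z. F p) =
   (\<Sum>x\<in>blocks m1 n. \<Sum>y\<in>blocks m2 n. if (\<forall>i<n. g (x i) (y i) = z i) then F (x, y) else (0::real))"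
proof -
  have "fiber_set g m1 m2 n z = {p \<in> blocks m1 n \<times> blocks m2 n. \<forall>i<n. g (fst p i) (snd p i) = z i}"
    by (auto simp: fiber_set_def)
  show ?thesis
    by (subst \<open>fiber_set g m1 m2 n z = _\<close>, simp add: sum.inter_filter sum.cartesian_product, rule sum.cong, auto)
qed

lemma ind_prod: "finite A \<Longrightarrow> (if \<forall>i\<in>A. Q i then 1 else 0) = (\<Prod>i\<in>A. if Q i then 1 else (0::real))"
  by (induction A rule: finite_induct) auto

lemma card_fs:
  assumes pm: "\<And>x y. x \<in> cube m1 \<Longrightarrow> y \<in> cube m2 \<Longrightarrow> g x y \<in> {-1, 1}"
    and bal: "(\<Sum>u\<in>cube m1. \<Sum>v\<in>cube m2. g u v) = 0"
    and z: "z \<in> cube n"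
  shows "real (card (fiber_set g m1 m2 n z)) = (2 ^ (m1 + m2) / 2) ^ n"
proof -
  have "real (card (fiber_set g m1 m2 n z)) = (\<Sum>p\<in>fiber_set g m1 m2 n z. 1)" by simp
  also have "\<dots> = (\<Sum>x\<in>blocks m1 n. \<Sum>y\<in>blocks m2 n. if (\<forall>i<n. g (x i) (y i) = z i) then 1 else 0)"
    by (rule sum_fs)
  also have "\<dots> = (\<Sum>x\<in>blocks m1 n. \<Sum>y\<in>blocks m2 n. \<Prod>i\<in>{..<n}. if g (x i) (y i) = z i then 1 else 0)"
    by (intro sum.cong refl, subst ind_prod[symmetric]) auto
  also have "\<dots> = (\<Prod>i\<in>{..<n}. \<Sum>u\<in>cube m1. \<Sum>v\<in>cube m2. if g u v = z i then 1 else 0)"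
    unfolding blocks_def by (rule fact2) auto
  also have "\<dots> = (\<Prod>i\<in>{..<n}. 2 ^ (m1 + m2) / 2)"
  proof (rule prod.cong[OF refl])
    fix i assume "i \<in> {..<n}"
    then have zi: "z i \<in> {-1, 1}" using z by (auto simp: cube_def)
    have "(\<Sum>u\<in>cube m1. \<Sum>v\<in>cube m2. if g u v = z i then 1 else 0) =
          (\<Sum>u\<in>cube m1. \<Sum>v\<in>cube m2. (1 + z i * g u v) / (2::real))"
      using pm zi by (intro sum.cong refl) (auto dest!: pm)
    also have "\<dots> = (real (card (cube m1)) * real (card (cube m2)) + z i * (\<Sum>u\<in>cube m1. \<Sum>v\<in>cube m2. g u v)) / 2"
      by (simp add: sum_divide_distrib[symmetric] sum.distrib sum_distrib_left)
    also have "\<dots> = 2 ^ (m1 + m2) / 2"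
      using bal by (simp add: card_cube power_add)
    finally show "(\<Sum>u\<in>cube m1. \<Sum>v\<in>cube m2. if g u v = z i then 1 else 0) = 2 ^ (m1 + m2) / (2::real)" .
  qed
  finally show ?thesis by simp
qed



lemma uniq_z:
  assumes pm: "\<And>x y. x \<in> cube m1 \<Longrightarrow> y \<in> cube m2 \<Longrightarrow> g x y \<in> {-1, 1}"
    and x: "x \<in> blocks m1 n" and y: "y \<in> blocks m2 n"
  shows "(\<Sum>z\<in>cube n. if (\<forall>i<n. g (x i) (y i) = z i) then w z else (0::real)) = w (restrict (\<lambda>i. g (x i) (y i)) {..<n})"
proof -
  let ?z0 = "restrict (\<lambda>i. g (x i) (y i)) {..<n}"
  have z0: "?z0 \<in> cube n" using x y pm by (auto simp: cube_def blocks_def PiE_iff)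
  have "\<And>z. z \<in> cube n \<Longrightarrow> (\<forall>i<n. g (x i) (y i) = z i) \<longleftrightarrow> z = ?z0"
    by (auto simp: cube_def PiE_iff extensional_def)
  then have "(\<Sum>z\<in>cube n. if (\<forall>i<n. g (x i) (y i) = z i) then w z else (0::real)) =
             (\<Sum>z\<in>cube n. if z = ?z0 then w z else 0)"
    by (intro sum.cong refl) auto
  also have "\<dots> = w ?z0" using z0 by (simp add: sum.delta')
  finally show ?thesis .
qed

lemma fiber_coeff:
  assumes pm: "\<And>x y. x \<in> cube m1 \<Longrightarrow> y \<in> cube m2 \<Longrightarrow> g x y \<in> {-1, 1}"
    and bal: "(\<Sum>u\<in>cube m1. \<Sum>v\<in>cube m2. g u v) = 0"
    and I: "I \<subseteq> {..<n}"
  shows "fcoeff n (fiber g m1 m2 n C) I =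
    (\<Sum>x\<in>blocks m1 n. \<Sum>y\<in>blocks m2 n. C x y * (\<Prod>i\<in>I. g (x i) (y i))) / 2 ^ ((m1 + m2) * n)"
proof -
  define K :: real where "K = (2 ^ (m1 + m2) / 2) ^ n"
  have K: "K * 2 ^ n = 2 ^ ((m1 + m2) * n)"
  proof -
    have "K * 2 ^ n = (2 ^ (m1 + m2) / 2 * 2) ^ n" unfolding K_def by (rule power_mult_distrib[symmetric])
    also have "\<dots> = (2 ^ (m1 + m2)) ^ n" by simp
    finally show ?thesis by (simp add: power_mult)
  qed
  have "(\<Sum>z\<in>cube n. fiber g m1 m2 n C z * (\<Prod>i\<in>I. z i)) =
        (\<Sum>z\<in>cube n. (\<Sum>x\<in>blocks m1 n. \<Sum>y\<in>blocks m2 n.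
            if (\<forall>i<n. g (x i) (y i) = z i) then C x y * (\<Prod>i\<in>I. z i) else 0) / K)"
  proof (rule sum.cong[OF refl])
    fix z assume z: "z \<in> cube n"
    show "fiber g m1 m2 n C z * (\<Prod>i\<in>I. z i) = (\<Sum>x\<in>blocks m1 n. \<Sum>y\<in>blocks m2 n.
            if (\<forall>i<n. g (x i) (y i) = z i) then C x y * (\<Prod>i\<in>I. z i) else 0) / K"
    proof -
      have cK: "real (card (fiber_set g m1 m2 n z)) = K" using card_fs[OF pm bal z] K_def by simp
      show ?thesis unfolding fiber_def sum_fs cK
        by (simp add: sum_distrib_right, intro disjI2 sum.cong refl, simp, blast)
    qed
  qed
  also have "\<dots> = (\<Sum>x\<in>blocks m1 n. \<Sum>y\<in>blocks m2 n. \<Sum>z\<in>cube n.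
            if (\<forall>i<n. g (x i) (y i) = z i) then C x y * (\<Prod>i\<in>I. z i) else 0) / K"
    unfolding sum_divide_distrib[symmetric]
    by (subst sum.swap, rule arg_cong2[where f="(/)"], rule sum.cong[OF refl], rule sum.swap, rule refl)
  also have "\<dots> = (\<Sum>x\<in>blocks m1 n. \<Sum>y\<in>blocks m2 n. C x y * (\<Prod>i\<in>I. g (x i) (y i))) / K"
  proof -
    have "\<And>x y. x \<in> blocks m1 n \<Longrightarrow> y \<in> blocks m2 n \<Longrightarrow> (\<Sum>z\<in>cube n.
            if (\<forall>i<n. g (x i) (y i) = z i) then C x y * (\<Prod>i\<in>I. z i) else 0) = C x y * (\<Prod>i\<in>I. g (x i) (y i))"
      using I by (subst uniq_z[OF pm]) (auto intro!: prod.cong)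
    then show ?thesis by (intro arg_cong2[where f="(/)"] sum.cong refl) auto
  qed
  finally have E: "(\<Sum>z\<in>cube n. fiber g m1 m2 n C z * (\<Prod>i\<in>I. z i)) =
     (\<Sum>x\<in>blocks m1 n. \<Sum>y\<in>blocks m2 n. C x y * (\<Prod>i\<in>I. g (x i) (y i))) / K" .
  show ?thesis unfolding fcoeff_def E K[symmetric] by (simp add: divide_divide_eq_left)
qed



definition phi :: "nat set \<Rightarrow> nat \<Rightarrow> (nat \<Rightarrow> nat \<Rightarrow> real) \<Rightarrow> nat \<Rightarrow> nat \<Rightarrow> real" where
  "phi S n x = restrict (\<lambda>i. restrict (\<lambda>j. \<Prod>j'\<in>S. x i j') {..<1}) {..<n}"

definition ind :: "bool \<Rightarrow> real" where "ind P = (if P then 1 else 0)"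

lemma phi_blocks: "x \<in> blocks m n \<Longrightarrow> S \<subseteq> {..<m} \<Longrightarrow> phi S n x \<in> blocks 1 n"
proof -
  assume x: "x \<in> blocks m n" and S: "S \<subseteq> {..<m}"
  have "\<And>i. i < n \<Longrightarrow> (\<Prod>j\<in>S. x i j) \<in> {-1, 1}"
    using x by (intro chi_cube[OF _ S]) (auto simp: blocks_def)
  then show ?thesis unfolding phi_def blocks_def by (auto simp: PiE_iff cube_def)
qed

lemma phi_eq:
  assumes "a \<in> blocks 1 n"
  shows "(a = phi S n x) \<longleftrightarrow> (\<forall>i<n. (\<Prod>j\<in>S. x i j) = a i 0)"
proof
  assume "a = phi S n x" then show "\<forall>i<n. (\<Prod>j\<in>S. x i j) = a i 0" by (simp add: phi_def)
next
  assume H: "\<forall>i<n. (\<Prod>j\<in>S. x i j) = a i 0"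
  show "a = phi S n x"
  proof (rule ext)
    fix i show "a i = phi S n x i"
    proof (cases "i < n")
      case True
      then have ai: "a i \<in> cube 1" using assms by (auto simp: blocks_def)
      show ?thesis
      proof (rule ext)
        fix j show "a i j = phi S n x i j"
          using ai H True by (cases "j = 0") (auto simp: phi_def cube_def PiE_iff extensional_def)
      qed
    next
      case False
      then show ?thesis using assms by (auto simp: phi_def blocks_def PiE_iff extensional_def)
    qed
  qed
qed

lemma sum_delta_ind:
  assumes "finite A" "c \<in> A"
  shows "(\<Sum>a\<in>A. ind (a = c) * f a) = (f c :: real)"
proof -
  have "(\<Sum>a\<in>A. ind (a = c) * f a) = (\<Sum>a\<in>A. if a = c then f a else 0)"
    by (intro sum.cong refl) (simp add: ind_def)
  then show ?thesis using assms by (simp add: sum.delta')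
qed

lemma ind_all: "finite A \<Longrightarrow> ind (\<forall>i\<in>A. Q i) = (\<Prod>i\<in>A. ind (Q i))"
  by (induction A rule: finite_induct) (auto simp: ind_def)

lemma coord:
  assumes pm: "\<And>x y. x \<in> cube m1 \<Longrightarrow> y \<in> cube m2 \<Longrightarrow> g x y \<in> {-1, 1}"
    and no_empty: "\<And>S T. S \<subseteq> {..<m1} \<Longrightarrow> T \<subseteq> {..<m2} \<Longrightarrow> S = {} \<or> T = {}
                     \<Longrightarrow> gadget_coeff g m1 m2 S T = 0"
    and S: "S \<subseteq> {..<m1}" "S \<noteq> {}" and T: "T \<subseteq> {..<m2}" "T \<noteq> {}"
    and \<alpha>: "\<alpha> \<in> {-1, 1}" and \<beta>: "\<beta> \<in> {-1, 1}"
  shows "(\<Sum>u\<in>cube m1. \<Sum>v\<in>cube m2. ind ((\<Prod>j\<in>S. u j) = \<alpha>) * ind ((\<Prod>j\<in>T. v j) = \<beta>) * g u v)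
           = 2 ^ (m1 + m2) / 4 * (\<alpha> * \<beta> * gadget_coeff g m1 m2 S T)"
    and "(\<Sum>u\<in>cube m1. \<Sum>v\<in>cube m2. ind ((\<Prod>j\<in>S. u j) = \<alpha>) * ind ((\<Prod>j\<in>T. v j) = \<beta>))
           = 2 ^ (m1 + m2) / 4"
proof -
  let ?G = "\<lambda>S T. (\<Sum>u\<in>cube m1. \<Sum>v\<in>cube m2. g u v * (\<Prod>j\<in>S. u j) * (\<Prod>j\<in>T. v j))"
  have G: "\<And>S T. ?G S T = 2 ^ (m1 + m2) * gadget_coeff g m1 m2 S T"
    by (simp add: gadget_coeff_def)
  have G00: "(\<Sum>u\<in>cube m1. \<Sum>v\<in>cube m2. g u v) = 0"
    using G[of "{}" "{}"] no_empty[of "{}" "{}"] by simp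
  have GS0: "(\<Sum>u\<in>cube m1. \<Sum>v\<in>cube m2. g u v * (\<Prod>j\<in>S. u j)) = 0"
    using G[of S "{}"] no_empty[of S "{}"] S by simp
  have G0T: "(\<Sum>u\<in>cube m1. \<Sum>v\<in>cube m2. g u v * (\<Prod>j\<in>T. v j)) = 0"
    using G[of "{}" T] no_empty[of "{}" T] T by simp
  have pw: "ind ((\<Prod>j\<in>S. u j) = \<alpha>) * ind ((\<Prod>j\<in>T. v j) = \<beta>) * g u v =
     (g u v + \<alpha> * (g u v * (\<Prod>j\<in>S. u j)) + \<beta> * (g u v * (\<Prod>j\<in>T. v j))
       + \<alpha> * \<beta> * (g u v * (\<Prod>j\<in>S. u j) * (\<Prod>j\<in>T. v j))) / 4"
    if "u \<in> cube m1" "v \<in> cube m2" for u v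
    using chi_cube[OF that(1) S(1)] chi_cube[OF that(2) T(1)] \<alpha> \<beta>
    by (auto simp: ind_def algebra_simps)
  have "(\<Sum>u\<in>cube m1. \<Sum>v\<in>cube m2. ind ((\<Prod>j\<in>S. u j) = \<alpha>) * ind ((\<Prod>j\<in>T. v j) = \<beta>) * g u v)
     = (\<Sum>u\<in>cube m1. \<Sum>v\<in>cube m2. (g u v + \<alpha> * (g u v * (\<Prod>j\<in>S. u j)) + \<beta> * (g u v * (\<Prod>j\<in>T. v j))
       + \<alpha> * \<beta> * (g u v * (\<Prod>j\<in>S. u j) * (\<Prod>j\<in>T. v j))) / 4)"
    using pw by (intro sum.cong refl) auto
  also have "\<dots> = ((\<Sum>u\<in>cube m1. \<Sum>v\<in>cube m2. g u v) + \<alpha> * (\<Sum>u\<in>cube m1. \<Sum>v\<in>cube m2. g u v * (\<Prod>j\<in>S. u j))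
       + \<beta> * (\<Sum>u\<in>cube m1. \<Sum>v\<in>cube m2. g u v * (\<Prod>j\<in>T. v j)) + \<alpha> * \<beta> * ?G S T) / 4"
    by (simp only: sum_divide_distrib[symmetric] sum.distrib sum_distrib_left[symmetric])
  also have "\<dots> = 2 ^ (m1 + m2) / 4 * (\<alpha> * \<beta> * gadget_coeff g m1 m2 S T)"
    unfolding G00 GS0 G0T G by simp
  finally show "(\<Sum>u\<in>cube m1. \<Sum>v\<in>cube m2. ind ((\<Prod>j\<in>S. u j) = \<alpha>) * ind ((\<Prod>j\<in>T. v j) = \<beta>) * g u v)
           = 2 ^ (m1 + m2) / 4 * (\<alpha> * \<beta> * gadget_coeff g m1 m2 S T)" .
  have "(\<Sum>u\<in>cube m1. \<Sum>v\<in>cube m2. ind ((\<Prod>j\<in>S. u j) = \<alpha>) * ind ((\<Prod>j\<in>T. v j) = \<beta>))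
      = (\<Sum>u\<in>cube m1. ind ((\<Prod>j\<in>S. u j) = \<alpha>)) * (\<Sum>v\<in>cube m2. ind ((\<Prod>j\<in>T. v j) = \<beta>))"
    by (simp add: sum_product)
  also have "\<dots> = (2 ^ m1 / 2) * (2 ^ m2 / 2)"
    unfolding ind_def by (simp only: sum_ind_chi[OF S \<alpha>] sum_ind_chi[OF T \<beta>])
  finally show "(\<Sum>u\<in>cube m1. \<Sum>v\<in>cube m2. ind ((\<Prod>j\<in>S. u j) = \<alpha>) * ind ((\<Prod>j\<in>T. v j) = \<beta>))
           = 2 ^ (m1 + m2) / 4" by (simp add: power_add)
qed



lemma swap4:
  fixes F :: "'a \<Rightarrow> 'b \<Rightarrow> 'c \<Rightarrow> 'd \<Rightarrow> real"
  shows "(\<Sum>x\<in>X. \<Sum>y\<in>Y. \<Sum>a\<in>A. \<Sum>b\<in>B. F x y a b) = (\<Sum>a\<in>A. \<Sum>b\<in>B. \<Sum>x\<in>X. \<Sum>y\<in>Y. F x y a b)"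
proof -
  have "(\<Sum>x\<in>X. \<Sum>y\<in>Y. \<Sum>a\<in>A. \<Sum>b\<in>B. F x y a b) = (\<Sum>x\<in>X. \<Sum>a\<in>A. \<Sum>y\<in>Y. \<Sum>b\<in>B. F x y a b)"
    by (rule sum.cong[OF refl], rule sum.swap)
  also have "\<dots> = (\<Sum>a\<in>A. \<Sum>x\<in>X. \<Sum>y\<in>Y. \<Sum>b\<in>B. F x y a b)" by (rule sum.swap)
  also have "\<dots> = (\<Sum>a\<in>A. \<Sum>x\<in>X. \<Sum>b\<in>B. \<Sum>y\<in>Y. F x y a b)"
    by (rule sum.cong[OF refl], rule sum.cong[OF refl], rule sum.swap)
  also have "\<dots> = (\<Sum>a\<in>A. \<Sum>b\<in>B. \<Sum>x\<in>X. \<Sum>y\<in>Y. F x y a b)"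
    by (rule sum.cong[OF refl], rule sum.swap)
  finally show ?thesis .
qed

lemma transfer:
  assumes pm: "\<And>x y. x \<in> cube m1 \<Longrightarrow> y \<in> cube m2 \<Longrightarrow> g x y \<in> {-1, 1}"
    and no_empty: "\<And>S T. S \<subseteq> {..<m1} \<Longrightarrow> T \<subseteq> {..<m2} \<Longrightarrow> S = {} \<or> T = {}
                     \<Longrightarrow> gadget_coeff g m1 m2 S T = 0"
    and S: "S \<subseteq> {..<m1}" "S \<noteq> {}" and T: "T \<subseteq> {..<m2}" "T \<noteq> {}"
    and I: "I \<subseteq> {..<n}"
  shows "(\<Sum>x\<in>blocks m1 n. \<Sum>y\<in>blocks m2 n. C (phi S n x) (phi T n y) * (\<Prod>i\<in>I. g (x i) (y i)))
     = (2 ^ (m1 + m2) / 4) ^ n * gadget_coeff g m1 m2 S T ^ card I *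
       (\<Sum>a\<in>blocks 1 n. \<Sum>b\<in>blocks 1 n. C a b * (\<Prod>i\<in>I. a i 0 * b i 0))"
proof -
  let ?c = "2 ^ (m1 + m2) / (4::real)"
  let ?gh = "gadget_coeff g m1 m2 S T"
  define W where "W a b x y = (\<Prod>i\<in>{..<n}. ind ((\<Prod>j\<in>S. x i j) = a i 0) * ind ((\<Prod>j\<in>T. y i j) = b i 0)
        * (if i \<in> I then g (x i) (y i) else 1))" for a b :: "nat \<Rightarrow> nat \<Rightarrow> real" and x y :: "nat \<Rightarrow> nat \<Rightarrow> real"
  have GI: "(\<Prod>i\<in>I. f i) = (\<Prod>i\<in>{..<n}. if i \<in> I then f i else 1)" for f :: "nat \<Rightarrow> real"
    using I by (simp add: prod.If_cases Int_absorb1)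
  have W_eq: "W a b x y = ind (a = phi S n x) * ind (b = phi T n y) * (\<Prod>i\<in>I. g (x i) (y i))"
    if "a \<in> blocks 1 n" "b \<in> blocks 1 n" for a b x y
    unfolding W_def prod.distrib phi_eq[OF that(1)] phi_eq[OF that(2)] GI[of "\<lambda>i. g (x i) (y i)"]
    by (simp add: ind_all[symmetric] Ball_def)
  have step1: "(\<Sum>a\<in>blocks 1 n. \<Sum>b\<in>blocks 1 n. C a b * W a b x y) = C (phi S n x) (phi T n y) * (\<Prod>i\<in>I. g (x i) (y i))"
    if x: "x \<in> blocks m1 n" and y: "y \<in> blocks m2 n" for x y
  proof -
    have "(\<Sum>a\<in>blocks 1 n. \<Sum>b\<in>blocks 1 n. C a b * W a b x y) =
          (\<Sum>a\<in>blocks 1 n. ind (a = phi S n x) * (\<Sum>b\<in>blocks 1 n. ind (b = phi T n y) * (C a b * (\<Prod>i\<in>I. g (x i) (y i)))))"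
      by (intro sum.cong refl) (simp add: W_eq sum_distrib_left mult_ac)
    also have "\<dots> = C (phi S n x) (phi T n y) * (\<Prod>i\<in>I. g (x i) (y i))"
      using phi_blocks[OF x S(1)] phi_blocks[OF y T(1)] by (simp add: sum_delta_ind)
    finally show ?thesis .
  qed
  have step3: "(\<Sum>x\<in>blocks m1 n. \<Sum>y\<in>blocks m2 n. W a b x y) = ?c ^ n * ?gh ^ card I * (\<Prod>i\<in>I. a i 0 * b i 0)"
    if a: "a \<in> blocks 1 n" and b: "b \<in> blocks 1 n" for a b
  proof -
    have "(\<Sum>x\<in>blocks m1 n. \<Sum>y\<in>blocks m2 n. W a b x y) =
      (\<Prod>i\<in>{..<n}. \<Sum>u\<in>cube m1. \<Sum>v\<in>cube m2. ind ((\<Prod>j\<in>S. u j) = a i 0) * ind ((\<Prod>j\<in>T. v j) = b i 0)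
        * (if i \<in> I then g u v else 1))"
      unfolding W_def blocks_def by (rule fact2) auto
    also have "\<dots> = (\<Prod>i\<in>{..<n}. ?c * (if i \<in> I then a i 0 * b i 0 * ?gh else 1))"
    proof (rule prod.cong[OF refl])
      fix i assume i: "i \<in> {..<n}"
      have ab: "a i 0 \<in> {-1, 1}" "b i 0 \<in> {-1, 1}" using a b i by (auto simp: blocks_def cube_def)
      show "(\<Sum>u\<in>cube m1. \<Sum>v\<in>cube m2. ind ((\<Prod>j\<in>S. u j) = a i 0) * ind ((\<Prod>j\<in>T. v j) = b i 0)
        * (if i \<in> I then g u v else 1)) = ?c * (if i \<in> I then a i 0 * b i 0 * ?gh else 1)"
        using coord[OF pm no_empty S T ab] by (cases "i \<in> I") (simp_all add: mult_ac)
    qed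
    also have "\<dots> = ?c ^ n * (\<Prod>i\<in>I. a i 0 * b i 0 * ?gh)"
    proof -
      have "(\<Prod>i\<in>{..<n}. ?c * (if i \<in> I then a i 0 * b i 0 * ?gh else 1)) =
            ?c ^ n * (\<Prod>i\<in>{..<n}. (if i \<in> I then a i 0 * b i 0 * ?gh else 1))"
        by (simp only: prod.distrib prod_constant card_lessThan)
      also have "\<dots> = ?c ^ n * (\<Prod>i\<in>I. a i 0 * b i 0 * ?gh)"
        using GI[of "\<lambda>i. a i 0 * b i 0 * ?gh"] by simp
      finally show ?thesis .
    qed
    also have "\<dots> = ?c ^ n * ?gh ^ card I * (\<Prod>i\<in>I. a i 0 * b i 0)"
      by (simp add: prod.distrib mult_ac)
    finally show ?thesis .
  qed
  have "(\<Sum>x\<in>blocks m1 n. \<Sum>y\<in>blocks m2 n. C (phi S n x) (phi T n y) * (\<Prod>i\<in>I. g (x i) (y i)))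
      = (\<Sum>x\<in>blocks m1 n. \<Sum>y\<in>blocks m2 n. \<Sum>a\<in>blocks 1 n. \<Sum>b\<in>blocks 1 n. C a b * W a b x y)"
    by (intro sum.cong refl) (erule step1[symmetric], assumption)
  also have "\<dots> = (\<Sum>a\<in>blocks 1 n. \<Sum>b\<in>blocks 1 n. \<Sum>x\<in>blocks m1 n. \<Sum>y\<in>blocks m2 n. C a b * W a b x y)"
    by (rule swap4)
  also have "\<dots> = (\<Sum>a\<in>blocks 1 n. \<Sum>b\<in>blocks 1 n. C a b * (?c ^ n * ?gh ^ card I * (\<Prod>i\<in>I. a i 0 * b i 0)))"
    by (intro sum.cong refl) (simp add: sum_distrib_left[symmetric] step3)
  also have "\<dots> = ?c ^ n * ?gh ^ card I * (\<Sum>a\<in>blocks 1 n. \<Sum>b\<in>blocks 1 n. C a b * (\<Prod>i\<in>I. a i 0 * b i 0))"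
    by (simp add: sum_distrib_left mult_ac)
  finally show ?thesis .
qed



lemma xor_pm: "x \<in> cube 1 \<Longrightarrow> y \<in> cube 1 \<Longrightarrow> XOR_gadget x y \<in> {-1, 1}"
proof -
  assume "x \<in> cube 1" "y \<in> cube 1"
  then have "x 0 \<in> {-1, 1}" "y 0 \<in> {-1, 1}" by (auto simp: cube_def PiE_iff)
  then show ?thesis by (auto simp: XOR_gadget_def)
qed

lemma xor_bal: "(\<Sum>u\<in>cube 1. \<Sum>v\<in>cube 1. XOR_gadget u v) = 0"
proof -
  have "(\<Sum>u\<in>cube 1. \<Sum>v\<in>cube 1. XOR_gadget u v) = (\<Sum>u\<in>cube 1. \<Prod>j\<in>{0}. u j) * (\<Sum>v\<in>cube 1. \<Prod>j\<in>{0}. v j)"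
    by (simp add: XOR_gadget_def sum_product)
  also have "\<dots> = 0" using sum_chi_cube[of "{0}" 1] by simp
  finally show ?thesis .
qed

lemma coeff_rel:
  assumes pm: "\<And>x y. x \<in> cube m1 \<Longrightarrow> y \<in> cube m2 \<Longrightarrow> g x y \<in> {-1, 1}"
    and no_empty: "\<And>S T. S \<subseteq> {..<m1} \<Longrightarrow> T \<subseteq> {..<m2} \<Longrightarrow> S = {} \<or> T = {}
                     \<Longrightarrow> gadget_coeff g m1 m2 S T = 0"
    and S: "S \<subseteq> {..<m1}" "S \<noteq> {}" and T: "T \<subseteq> {..<m2}" "T \<noteq> {}"
    and I: "I \<subseteq> {..<n}"
  shows "fcoeff n (fiber g m1 m2 n (\<lambda>x y. C (phi S n x) (phi T n y))) I
       = gadget_coeff g m1 m2 S T ^ card I * fcoeff n (fiber XOR_gadget 1 1 n C) I"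
proof -
  have bal: "(\<Sum>u\<in>cube m1. \<Sum>v\<in>cube m2. g u v) = 0"
    using no_empty[of "{}" "{}"] by (simp add: gadget_coeff_def)
  define \<Sigma> where "\<Sigma> = (\<Sum>a\<in>blocks 1 n. \<Sum>b\<in>blocks 1 n. C a b * (\<Prod>i\<in>I. a i 0 * b i 0))"
  have X: "fcoeff n (fiber XOR_gadget 1 1 n C) I = \<Sigma> / 2 ^ ((1 + 1) * n)"
  proof -
    have "fcoeff n (fiber XOR_gadget 1 1 n C) I = (\<Sum>x\<in>blocks 1 n. \<Sum>y\<in>blocks 1 n. C x y * (\<Prod>i\<in>I. XOR_gadget (x i) (y i))) / 2^((1+1)*n)"
      by (rule fiber_coeff[where ?m1.0=1 and ?m2.0=1 and g=XOR_gadget, OF xor_pm xor_bal I])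
    then show ?thesis unfolding XOR_gadget_def \<Sigma>_def .
  qed
  have L: "fcoeff n (fiber g m1 m2 n (\<lambda>x y. C (phi S n x) (phi T n y))) I
     = (2 ^ (m1 + m2) / 4) ^ n * gadget_coeff g m1 m2 S T ^ card I * \<Sigma> / 2 ^ ((m1 + m2) * n)"
  proof -
    have 1: "fcoeff n (fiber g m1 m2 n (\<lambda>x y. C (phi S n x) (phi T n y))) I =
      (\<Sum>x\<in>blocks m1 n. \<Sum>y\<in>blocks m2 n. C (phi S n x) (phi T n y) * (\<Prod>i\<in>I. g (x i) (y i))) / 2 ^ ((m1 + m2) * n)"
      by (rule fiber_coeff[OF _ bal I]) (fact pm)
    have 2: "(\<Sum>x\<in>blocks m1 n. \<Sum>y\<in>blocks m2 n. C (phi S n x) (phi T n y) * (\<Prod>i\<in>I. g (x i) (y i)))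
     = (2 ^ (m1 + m2) / 4) ^ n * gadget_coeff g m1 m2 S T ^ card I * \<Sigma>"
      unfolding \<Sigma>_def by (rule transfer[OF _ no_empty S T I]) (fact pm)
    show ?thesis unfolding 1 2 ..
  qed
  have ar: "(2 ^ (m1 + m2) / 4) ^ n / 2 ^ ((m1 + m2) * n) = (1::real) / 2 ^ ((1 + 1) * n)"
  proof -
    have "(4::real) ^ n = 2 ^ (n + n)" by (simp add: power_add power_mult_distrib[symmetric])
    then show ?thesis by (simp add: power_divide power_mult)
  qed
  have "(2 ^ (m1 + m2) / 4) ^ n * gadget_coeff g m1 m2 S T ^ card I * \<Sigma> / 2 ^ ((m1 + m2) * n)
    = gadget_coeff g m1 m2 S T ^ card I * \<Sigma> * ((2 ^ (m1 + m2) / 4) ^ n / 2 ^ ((m1 + m2) * n))"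
    by (simp only: times_divide_eq_right mult_ac)
  also have "\<dots> = gadget_coeff g m1 m2 S T ^ card I * (\<Sigma> / 2 ^ ((1 + 1) * n))"
    unfolding ar by simp
  finally show ?thesis unfolding L X .
qed



fun dmap :: "('a \<Rightarrow> 'c) \<Rightarrow> ('b \<Rightarrow> 'd) \<Rightarrow> ('c, 'd) dproto \<Rightarrow> ('a, 'b) dproto" where
  "dmap f h (Leaf v) = Leaf v"
| "dmap f h (Alice q P Q) = Alice (q \<circ> f) (dmap f h P) (dmap f h Q)"
| "dmap f h (Bob q P Q) = Bob (q \<circ> h) (dmap f h P) (dmap f h Q)"

lemma dmap_eval: "dproto_eval (dmap f h P) x y = dproto_eval P (f x) (h y)"
  by (induction P) auto

lemma dmap_cost: "dproto_cost (dmap f h P) = dproto_cost P"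
  by (induction P) auto

lemma dmap_ok: "dproto_outputs_ok (dmap f h P) = dproto_outputs_ok P"
  by (induction P) auto

lemma rval_map: "rproto_val (map_pmf (dmap f h) p) x y = rproto_val p (f x) (h y)"
  unfolding rproto_val_def by (simp add: dmap_eval)

lemma rok_map: "rproto_ok d p \<Longrightarrow> rproto_ok d (map_pmf (dmap f h) p)"
  unfolding rproto_ok_def by (auto simp: dmap_cost dmap_ok)

lemma eval_bound: "dproto_outputs_ok P \<Longrightarrow> \<bar>dproto_eval P x y\<bar> \<le> 1"
  by (induction P) auto

lemma rval_bound:
  assumes "rproto_ok d p"
  shows "\<bar>rproto_val p x y\<bar> \<le> 1"
proof -
  have b: "\<forall>P\<in>set_pmf p. \<bar>dproto_eval P x y\<bar> \<le> 1"
    using assms unfolding rproto_ok_def by (auto intro: eval_bound)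
  have int: "integrable (measure_pmf p) (\<lambda>P. dproto_eval P x y)"
    by (rule measure_pmf.integrable_const_bound[where B=1]) (use b in \<open>auto simp: AE_measure_pmf_iff\<close>)
  have "measure_pmf.expectation p (\<lambda>P. dproto_eval P x y) \<le> 1"
    by (rule measure_pmf.integral_le_const[OF int]) (use b in \<open>auto simp: AE_measure_pmf_iff\<close>)
  moreover have "-1 \<le> measure_pmf.expectation p (\<lambda>P. dproto_eval P x y)"
    by (rule measure_pmf.integral_ge_const[OF int]) (use b in \<open>auto simp: AE_measure_pmf_iff\<close>)
  ultimately show ?thesis unfolding rproto_val_def by simp
qed

lemma fiber_bound:
  assumes "\<And>x y. \<bar>C x y\<bar> \<le> 1"
  shows "\<bar>fiber g m1 m2 n C z\<bar> \<le> 1"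
proof -
  let ?F = "fiber_set g m1 m2 n z"
  have fin: "finite ?F"
    by (rule finite_subset[of _ "blocks m1 n \<times> blocks m2 n"]) (auto simp: fiber_set_def)
  have "\<bar>\<Sum>(x, y)\<in>?F. C x y\<bar> \<le> (\<Sum>(x, y)\<in>?F. 1)"
    by (rule order_trans[OF sum_abs], rule sum_mono) (use assms in auto)
  then have "\<bar>\<Sum>(x, y)\<in>?F. C x y\<bar> \<le> real (card ?F)" by simp
  then show ?thesis unfolding fiber_def
    by (cases "card ?F = 0") (auto simp: abs_divide divide_le_eq_1)
qed

lemma fcoeff_bound:
  assumes "\<And>z. \<bar>f z\<bar> \<le> 1" and I: "I \<subseteq> {..<n}"
  shows "\<bar>fcoeff n f I\<bar> \<le> 1"
proof -
  have "\<bar>\<Sum>z\<in>cube n. f z * (\<Prod>i\<in>I. z i)\<bar> \<le> (\<Sum>z\<in>cube n. 1)"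
  proof (rule order_trans[OF sum_abs], rule sum_mono)
    fix z assume z: "z \<in> cube n"
    have "(\<Prod>i\<in>I. z i) \<in> {-1, 1}" by (rule chi_cube[OF z I])
    then show "\<bar>f z * (\<Prod>i\<in>I. z i)\<bar> \<le> 1" using assms(1)[of z] by (auto simp: abs_mult)
  qed
  then show ?thesis unfolding fcoeff_def by (simp add: card_cube abs_divide)
qed

lemma L1k_bound:
  assumes "\<And>z. \<bar>f z\<bar> \<le> 1"
  shows "L1k n k f \<le> real (card {I. I \<subseteq> {..<n} \<and> card I = k})"
  unfolding L1k_def
  using sum_mono[of "{I. I \<subseteq> {..<n} \<and> card I = k}" "\<lambda>I. \<bar>fcoeff n f I\<bar>" "\<lambda>_. 1"] fcoeff_bound[OF assms]
  by auto

lemma L1k_nonneg: "0 \<le> L1k n k f"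
  unfolding L1k_def by (simp add: sum_nonneg)

lemma ok_nonempty: "rproto_ok d (return_pmf (Leaf 0))"
  by (simp add: rproto_ok_def)

lemma bdd_g: "bdd_above ((\<lambda>p. L1k n k (fiber g m1 m2 n (rproto_val p))) ` {p. rproto_ok d p})"
  by (rule bdd_aboveI[where M="real (card {I. I \<subseteq> {..<n} \<and> card I = k})"])
     (auto intro!: L1k_bound fiber_bound rval_bound)

lemma L1k_comm_nonneg: "0 \<le> L1k_comm g k d m1 m2 n"
  unfolding L1k_comm_def
  by (rule cSUP_upper2[OF bdd_g, of "return_pmf (Leaf 0)"]) (auto simp: ok_nonempty L1k_nonneg)



lemma orth:
  assumes u: "u \<in> cube m" and u': "u' \<in> cube m"
  shows "(\<Sum>S\<in>Pow {..<m}. (\<Prod>j\<in>S. u j) * (\<Prod>j\<in>S. u' j)) = (if u = u' then 2 ^ m else (0::real))"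
proof -
  have "(\<Sum>S\<in>Pow {..<m}. (\<Prod>j\<in>S. u j) * (\<Prod>j\<in>S. u' j)) =
        (\<Sum>S\<in>Pow {..<m}. (\<Prod>j\<in>S. u j * u' j) * (\<Prod>j\<in>{..<m} - S. 1))"
    by (simp add: prod.distrib)
  also have "\<dots> = (\<Prod>j\<in>{..<m}. u j * u' j + 1)"
    by (rule prod_add[symmetric]) simp
  also have "\<dots> = (if u = u' then 2 ^ m else 0)"
  proof (cases "u = u'")
    case True
    have "u j * u j + 1 = 2" if "j \<in> {..<m}" for j
    proof -
      have "u j \<in> {-1, 1}" using u that by (auto simp: cube_def PiE_iff)
      then show ?thesis by auto
    qed
    then show ?thesis using True by simp
  next
    case False
    then obtain j where j: "j < m" "u j \<noteq> u' j"
      using u u' by (auto simp: cube_def PiE_iff extensional_def fun_eq_iff) (metis not_less)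
    moreover have "u j \<in> {-1, 1}" "u' j \<in> {-1, 1}" using u u' j by (auto simp: cube_def PiE_iff)
    ultimately have "u j * u' j + 1 = 0" by auto
    then show ?thesis using False j by (auto intro!: prod_zero)
  qed
  finally show ?thesis .
qed

lemma sum_delta_mult:
  assumes "finite A" "c \<in> A"
  shows "(\<Sum>a\<in>A. f a * (if a = c then k else 0)) = f c * (k::real)"
proof -
  have "(\<Sum>a\<in>A. f a * (if a = c then k else 0)) = (\<Sum>a\<in>A. if a = c then f a * k else 0)"
    by (intro sum.cong refl) simp
  then show ?thesis using assms by (simp add: sum.delta')
qed

lemma parseval:
  assumes pm: "\<And>x y. x \<in> cube m1 \<Longrightarrow> y \<in> cube m2 \<Longrightarrow> g x y \<in> {-1, 1}"
  shows "(\<Sum>S\<in>Pow {..<m1}. \<Sum>T\<in>Pow {..<m2}. (gadget_coeff g m1 m2 S T)\<^sup>2) = 1"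
proof -
  define N :: real where "N = 2 ^ (m1 + m2)"
  define A where "A S T = (\<Sum>u\<in>cube m1. \<Sum>v\<in>cube m2. g u v * (\<Prod>j\<in>S. u j) * (\<Prod>j\<in>T. v j))" for S T
  have gc: "gadget_coeff g m1 m2 S T = A S T / N" for S T unfolding gadget_coeff_def A_def N_def ..
  have inner: "(\<Sum>S\<in>Pow {..<m1}. \<Sum>T\<in>Pow {..<m2}. A S T * ((\<Prod>j\<in>S. u' j) * (\<Prod>j\<in>T. v' j))) = N * g u' v'"
    if u': "u' \<in> cube m1" and v': "v' \<in> cube m2" for u' v'
  proof -
    have "(\<Sum>S\<in>Pow {..<m1}. \<Sum>T\<in>Pow {..<m2}. A S T * ((\<Prod>j\<in>S. u' j) * (\<Prod>j\<in>T. v' j)))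
      = (\<Sum>S\<in>Pow {..<m1}. \<Sum>T\<in>Pow {..<m2}. \<Sum>u\<in>cube m1. \<Sum>v\<in>cube m2.
           g u v * (((\<Prod>j\<in>S. u j) * (\<Prod>j\<in>S. u' j)) * ((\<Prod>j\<in>T. v j) * (\<Prod>j\<in>T. v' j))))"
      unfolding A_def by (simp only: sum_distrib_right) (simp add: mult_ac)
    also have "\<dots> = (\<Sum>u\<in>cube m1. \<Sum>v\<in>cube m2. \<Sum>S\<in>Pow {..<m1}. \<Sum>T\<in>Pow {..<m2}.
           g u v * (((\<Prod>j\<in>S. u j) * (\<Prod>j\<in>S. u' j)) * ((\<Prod>j\<in>T. v j) * (\<Prod>j\<in>T. v' j))))"
      by (rule swap4)
    also have "\<dots> = (\<Sum>u\<in>cube m1. \<Sum>v\<in>cube m2. g u v *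
           ((if u = u' then 2 ^ m1 else 0) * (if v = v' then 2 ^ m2 else 0)))"
    proof (intro sum.cong refl)
      fix u v assume u: "u \<in> cube m1" and v: "v \<in> cube m2"
      show "(\<Sum>S\<in>Pow {..<m1}. \<Sum>T\<in>Pow {..<m2}.
           g u v * (((\<Prod>j\<in>S. u j) * (\<Prod>j\<in>S. u' j)) * ((\<Prod>j\<in>T. v j) * (\<Prod>j\<in>T. v' j)))) =
           g u v * ((if u = u' then 2 ^ m1 else 0) * (if v = v' then 2 ^ m2 else 0))"
      proof -
        have "(\<Sum>S\<in>Pow {..<m1}. \<Sum>T\<in>Pow {..<m2}.
           g u v * (((\<Prod>j\<in>S. u j) * (\<Prod>j\<in>S. u' j)) * ((\<Prod>j\<in>T. v j) * (\<Prod>j\<in>T. v' j)))) =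
           g u v * ((\<Sum>S\<in>Pow {..<m1}. (\<Prod>j\<in>S. u j) * (\<Prod>j\<in>S. u' j)) * (\<Sum>T\<in>Pow {..<m2}. (\<Prod>j\<in>T. v j) * (\<Prod>j\<in>T. v' j)))"
          by (rule sym, subst sum_product, simp only: sum_distrib_left)
        then show ?thesis by (simp only: orth[OF u u'] orth[OF v v'])
      qed
    qed
    also have "\<dots> = (\<Sum>u\<in>cube m1. \<Sum>v\<in>cube m2. (g u v * (if u = u' then 2 ^ m1 else 0)) * (if v = v' then 2 ^ m2 else 0))"
      by (simp only: mult.assoc)
    also have "\<dots> = (\<Sum>u\<in>cube m1. (g u v' * (if u = u' then 2 ^ m1 else 0)) * 2 ^ m2)"
      by (intro sum.cong refl, rule sum_delta_mult[OF finite_cube v'])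
    also have "\<dots> = (\<Sum>u\<in>cube m1. g u v' * (if u = u' then 2 ^ m1 else 0)) * 2 ^ m2"
      by (rule sum_distrib_right[symmetric])
    also have "\<dots> = N * g u' v'" unfolding sum_delta_mult[OF finite_cube u'] by (simp add: N_def power_add)
    finally show ?thesis .
  qed
  have "(\<Sum>S\<in>Pow {..<m1}. \<Sum>T\<in>Pow {..<m2}. (A S T)\<^sup>2)
      = (\<Sum>S\<in>Pow {..<m1}. \<Sum>T\<in>Pow {..<m2}. \<Sum>u'\<in>cube m1. \<Sum>v'\<in>cube m2.
           g u' v' * (A S T * ((\<Prod>j\<in>S. u' j) * (\<Prod>j\<in>T. v' j))))"
    unfolding power2_eq_square
  proof (intro sum.cong refl)
    fix S T
    have "A S T * A S T = (\<Sum>u'\<in>cube m1. \<Sum>v'\<in>cube m2. g u' v' * (\<Prod>j\<in>S. u' j) * (\<Prod>j\<in>T. v' j)) * A S T"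
      by (subst (1) A_def) (rule refl)
    also have "\<dots> = (\<Sum>u'\<in>cube m1. \<Sum>v'\<in>cube m2. g u' v' * (\<Prod>j\<in>S. u' j) * (\<Prod>j\<in>T. v' j) * A S T)"
      by (simp only: sum_distrib_right)
    also have "\<dots> = (\<Sum>u'\<in>cube m1. \<Sum>v'\<in>cube m2. g u' v' * (A S T * ((\<Prod>j\<in>S. u' j) * (\<Prod>j\<in>T. v' j))))"
      by (intro sum.cong refl) (simp only: mult_ac)
    finally show "A S T * A S T = \<dots>" .
  qed
  also have "\<dots> = (\<Sum>u'\<in>cube m1. \<Sum>v'\<in>cube m2. \<Sum>S\<in>Pow {..<m1}. \<Sum>T\<in>Pow {..<m2}.
           g u' v' * (A S T * ((\<Prod>j\<in>S. u' j) * (\<Prod>j\<in>T. v' j))))"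
    by (rule swap4)
  also have "\<dots> = (\<Sum>u'\<in>cube m1. \<Sum>v'\<in>cube m2. g u' v' * (N * g u' v'))"
    by (intro sum.cong refl) (simp add: sum_distrib_left[symmetric] inner)
  also have "\<dots> = (\<Sum>u'\<in>cube m1. \<Sum>v'\<in>cube m2. N)"
  proof (intro sum.cong refl)
    fix u v assume "u \<in> cube m1" "v \<in> cube m2"
    then have "g u v \<in> {-1, 1}" by (rule pm)
    then show "g u v * (N * g u v) = N" by auto
  qed
  also have "\<dots> = N * N" by (simp add: card_cube N_def power_add)
  finally have "(\<Sum>S\<in>Pow {..<m1}. \<Sum>T\<in>Pow {..<m2}. (A S T)\<^sup>2) = N * N" .
  then show ?thesis unfolding gc
    by (simp add: power_divide sum_divide_distrib[symmetric] N_def power2_eq_square)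
qed



theorem theorem7p5:
  fixes g :: "(nat \<Rightarrow> real) \<Rightarrow> (nat \<Rightarrow> real) \<Rightarrow> real"
    and m1 m2 k d n :: nat
  assumes gadget: "\<And>x y. x \<in> cube m1 \<Longrightarrow> y \<in> cube m2 \<Longrightarrow> g x y \<in> {-1, 1}"
    and no_empty: "\<And>S T. S \<subseteq> {..<m1} \<Longrightarrow> T \<subseteq> {..<m2} \<Longrightarrow> S = {} \<or> T = {}
                     \<Longrightarrow> gadget_coeff g m1 m2 S T = 0"
  shows "L1k_comm XOR_gadget k d 1 1 n
           \<le> inverse (Max {\<bar>gadget_coeff g m1 m2 S T\<bar> | S T. S \<subseteq> {..<m1} \<and> T \<subseteq> {..<m2}}) ^ k
             * L1k_comm g k d m1 m2 n
       \<and> inverse (Max {\<bar>gadget_coeff g m1 m2 S T\<bar> | S T. S \<subseteq> {..<m1} \<and> T \<subseteq> {..<m2}}) ^ k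
             * L1k_comm g k d m1 m2 n
           \<le> 2 powr (real ((m1 + m2) * k) / 2) * L1k_comm g k d m1 m2 n"
proof -
  define MS where "MS = {\<bar>gadget_coeff g m1 m2 S T\<bar> | S T. S \<subseteq> {..<m1} \<and> T \<subseteq> {..<m2}}"
  define Mx where "Mx = Max MS"
  have MS_eq: "MS = (\<lambda>(S, T). \<bar>gadget_coeff g m1 m2 S T\<bar>) ` (Pow {..<m1} \<times> Pow {..<m2})"
    unfolding MS_def by auto
  have finMS: "finite MS" unfolding MS_eq by simp
  have neMS: "MS \<noteq> {}" unfolding MS_eq by (simp add: Pow_not_empty)
  have Mx_ge: "\<bar>gadget_coeff g m1 m2 S T\<bar> \<le> Mx" if "S \<subseteq> {..<m1}" "T \<subseteq> {..<m2}" for S T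
    unfolding Mx_def by (rule Max_ge[OF finMS]) (use that in \<open>auto simp: MS_def\<close>)
  obtain S0 T0 where S0: "S0 \<subseteq> {..<m1}" and T0: "T0 \<subseteq> {..<m2}" and Mx0: "Mx = \<bar>gadget_coeff g m1 m2 S0 T0\<bar>"
    using Max_in[OF finMS neMS] unfolding Mx_def MS_def by auto
  have "1 = (\<Sum>S\<in>Pow {..<m1}. \<Sum>T\<in>Pow {..<m2}. (gadget_coeff g m1 m2 S T)\<^sup>2)"
    using parseval[of m1 m2 g] gadget by simp
  also have "\<dots> \<le> (\<Sum>S\<in>Pow {..<m1}. \<Sum>T\<in>Pow {..<m2}. Mx\<^sup>2)"
  proof (intro sum_mono)
    fix S T assume "S \<in> Pow {..<m1}" "T \<in> Pow {..<m2}"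
    then have "\<bar>gadget_coeff g m1 m2 S T\<bar> \<le> Mx" by (intro Mx_ge) auto
    then show "(gadget_coeff g m1 m2 S T)\<^sup>2 \<le> Mx\<^sup>2"
      by (metis abs_ge_zero abs_le_square_iff abs_of_nonneg order_trans)
  qed
  also have "\<dots> = 2 ^ (m1 + m2) * Mx\<^sup>2" by (simp add: card_Pow power_add)
  finally have par: "1 \<le> 2 ^ (m1 + m2) * Mx\<^sup>2" .
  have Mx_pos: "0 < Mx"
  proof -
    have "Mx \<ge> 0" using Mx0 by simp
    moreover have "Mx \<noteq> 0" using par by auto
    ultimately show ?thesis by simp
  qed
  have S0ne: "S0 \<noteq> {}" and T0ne: "T0 \<noteq> {}"
    using no_empty[OF S0 T0] Mx0 Mx_pos by auto
  let ?tr = "dmap (phi S0 n) (phi T0 n)"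
  have key: "L1k n k (fiber XOR_gadget 1 1 n (rproto_val p))
      = inverse Mx ^ k * L1k n k (fiber g m1 m2 n (rproto_val (map_pmf ?tr p)))" for p
  proof -
    have rv: "rproto_val (map_pmf ?tr p) = (\<lambda>x y. rproto_val p (phi S0 n x) (phi T0 n y))"
      by (intro ext) (simp add: rval_map)
    have "L1k n k (fiber g m1 m2 n (rproto_val (map_pmf ?tr p)))
        = (\<Sum>I\<in>{I. I \<subseteq> {..<n} \<and> card I = k}. Mx ^ k * \<bar>fcoeff n (fiber XOR_gadget 1 1 n (rproto_val p)) I\<bar>)"
      unfolding L1k_def rv
    proof (intro sum.cong refl)
      fix I assume "I \<in> {I. I \<subseteq> {..<n} \<and> card I = k}"
      then have I: "I \<subseteq> {..<n}" and cI: "card I = k" by auto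
      show "\<bar>fcoeff n (fiber g m1 m2 n (\<lambda>x y. rproto_val p (phi S0 n x) (phi T0 n y))) I\<bar>
          = Mx ^ k * \<bar>fcoeff n (fiber XOR_gadget 1 1 n (rproto_val p)) I\<bar>"
        by (subst coeff_rel[OF _ no_empty S0 S0ne T0 T0ne I]) (use gadget in \<open>auto simp: abs_mult power_abs Mx0 cI\<close>)
    qed
    also have "\<dots> = Mx ^ k * L1k n k (fiber XOR_gadget 1 1 n (rproto_val p))"
      unfolding L1k_def by (simp add: sum_distrib_left)
    finally show ?thesis using Mx_pos by (simp add: field_simps power_inverse)
  qed
  let ?L = "L1k_comm g k d m1 m2 n"
  have part1: "L1k_comm XOR_gadget k d 1 1 n \<le> inverse Mx ^ k * ?L"
    unfolding L1k_comm_def[of XOR_gadget]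
  proof (rule cSUP_least)
    show "{p. rproto_ok d p} \<noteq> {}" using ok_nonempty by blast
  next
    fix p assume p: "p \<in> {p. rproto_ok d p}"
    have "L1k n k (fiber g m1 m2 n (rproto_val (map_pmf ?tr p))) \<le> ?L"
      unfolding L1k_comm_def
      by (rule cSUP_upper[OF _ bdd_g]) (use p rok_map in auto)
    then show "L1k n k (fiber XOR_gadget 1 1 n (rproto_val p)) \<le> inverse Mx ^ k * ?L"
      unfolding key using Mx_pos by (intro mult_left_mono) auto
  qed
  have inv_le: "inverse Mx \<le> 2 powr (real (m1 + m2) / 2)"
  proof -
    have "(inverse Mx)\<^sup>2 \<le> 2 ^ (m1 + m2)"
      using par Mx_pos by (simp add: power_inverse field_simps)
    then have "inverse Mx \<le> sqrt (2 ^ (m1 + m2))"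
      using Mx_pos by (metis less_imp_le inverse_nonnegative_iff_nonnegative real_le_rsqrt)
    also have "\<dots> = 2 powr (real (m1 + m2) / 2)"
      by (simp add: powr_half_sqrt[symmetric] powr_realpow[symmetric] powr_powr)
    finally show ?thesis .
  qed
  have "inverse Mx ^ k \<le> (2 powr (real (m1 + m2) / 2)) ^ k"
    by (rule power_mono[OF inv_le]) (use Mx_pos in simp)
  also have "\<dots> = 2 powr (real ((m1 + m2) * k) / 2)"
    by (simp add: powr_realpow[symmetric] powr_powr)
  finally have part2: "inverse Mx ^ k * ?L \<le> 2 powr (real ((m1 + m2) * k) / 2) * ?L"
    by (rule mult_right_mono) (rule L1k_comm_nonneg)
  show ?thesis using part1 part2 unfolding Mx_def MS_def by simp
qed

end
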